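(* Let $\alpha\in(0,1)$, $T_+=\sqrt{1-\alpha}$, $\tau>0$, and let $N\ge 2$ and $1\le m_c<N$ be integers. Consider the $N$-dimensional Galerkin–Koornwinder (GK) system $$\frac{d\boldsymbol{y}}{dt}=A(\tau)\boldsymbol{y}+G_2(\boldsymbol{y})+G_3(\boldsymbol{y}),\qquad \boldsymbol{y}=(y_0,\dots,y_{N-1})^T\in\mathbb{R}^N,$$ with $A(\tau)$, $G_2$, $G_3$ as described in the context. Assume that $A(\tau)$ is diagonalizable over $\mathbb{C}$, and let $\boldsymbol{y}(t)$ be a solution of this system on an interval $[0,t_m]$. Let $\varphi_\tau\colon H_{\mathfrak{c}}\to H_{\mathfrak{s}}$ be a parameterization of $\boldsymbol{y}_{\mathfrak{s}}$ in terms of $\boldsymbol{y}_{\mathfrak{c}}$. Assume that for some $R>0$, $$\|\boldsymbol{y}(t)\|\le R,\qquad \|\boldsymbol{y}_{\mathfrak{c}}(t)+\varphi_\tau(\boldsymbol{y}_{\mathfrak{c}}(t))\|\le R,\qquad t\in[0,t_m].$$ Then there exists a constant $C(R)>0$ such that $$\overline{\Big\|\dot{\boldsymbol{z}}_{\mathfrak{c}}-\Lambda_{\mathfrak{c}}\boldsymbol{z}_{\mathfrak{c}}-Q_{\mathfrak{c}}^*\Big(G_2\big(P_{\mathfrak{c}}\boldsymbol{z}_{\mathfrak{c}}+\varphi_\tau(P_{\mathfrak{c}}\boldsymbol{z}_{\mathfrak{c}})\big)+G_3\big(P_{\mathfrak{c}}\boldsymbol{z}_{\mathfrak{c}}+\varphi_\tau(P_{\mathfrak{c}}\boldsymbol{z}_{\mathfrak{c}})\big)\Big)\Big\|^2}\;\le\;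 C(R)\,\overline{\big\|P_{\mathfrak{s}}\boldsymbol{z}_{\mathfrak{s}}-\varphi_\tau(P_{\mathfrak{c}}\boldsymbol{z}_{\mathfrak{c}})\big\|^2},$$ where $\overline{f}=\frac{1}{t_m}\int_0^{t_m}f(t)\,dt$ denotes the time average over $(0,t_m)$ and $\Lambda_{\mathfrak{c}}=\mathrm{diag}(\lambda_1,\dots,\lambda_{m_c})$.
   Context: Notation for the GK system. For $j\ge 0$ let $\kappa_j=\frac{(j^2+1)((j+1)^2+1)}{2j+1}$ (the squared norm of the $j$-th augmented Koornwinder polynomial) and $K_j(-1)=(j^2+j+1)(-1)^j$. For each $n\ge1$, the coefficients $\boldsymbol{a}_n=(a_{n,0},\dots,a_{n,n-1})^T$ are the solution of the upper triangular system $\mathbf{T}\boldsymbol{a}_n=\boldsymbol{b}_n$, where $\mathbf{T}=(\mathbf{T}_{i,j})_{0\le i,j\le n-1}$ has $\mathbf{T}_{i,j}=0$ if $j<i$, $\mathbf{T}_{i,i}=i^2+1$, $\mathbf{T}_{i,j}=-(2i+1)$ if $j>i$, and $b_{n,i}=-\tfrac12(2i+1)(n+i+1)(n-i)$ if $n+i$ is even, $b_{n,i}=(n^2+n)(2i+1)-\tfrac{i}{2}(n+i)(n-i+1)-\tfrac12(i+1)(n-i-1)(n+i+2)$ if $n+i$ is odd. The matrix $A(\tau)$ is the $N\times N$ real matrix with entries, for $0\le j,n\le N-1$, $$(A(\tau))_{j,n}=\frac{1}{\kappa_j}\Big(1-3T_+^2-\alpha K_n(-1)+\frac{2}{\tau}\sum_{k=0}^{n-1}a_{n,k}\big(\delta_{j,k}\kappa_j-1\big)\Big).$$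 The nonlinear terms are $G_2(\boldsymbol{y})=-3T_+\big(\sum_{n=0}^{N-1}y_n\big)^2\boldsymbol{\nu}_N$ and $G_3(\boldsymbol{y})=-\big(\sum_{n=0}^{N-1}y_n\big)^3\boldsymbol{\nu}_N$, with $\boldsymbol{\nu}_N=(1/\kappa_0,\dots,1/\kappa_{N-1})^T$; they are extended to $\mathbb{C}^N$ by the same formulas. (This system is the GK approximation of the delay equation $\dot{\hat T}=(1-3T_+^2)\hat T(t)-\alpha\hat T(t-\tau)-3T_+\hat T^2(t)-\hat T^3(t)$.) Spectral notation. The eigenvalues $\lambda_1,\dots,\lambda_N$ of $A(\tau)$ (repeated with multiplicity) are ordered by decreasing real part, and among equal real parts by decreasing imaginary part; $\boldsymbol{e}_1,\dots,\boldsymbol{e}_N$ are corresponding eigenvectors. $P=[\boldsymbol{e}_1,\dots,\boldsymbol{e}_N]$, $P_{\mathfrak{c}}=[\boldsymbol{e}_1,\dots,\boldsymbol{e}_{m_c}]$, $P_{\mathfrak{s}}=[\boldsymbol{e}_{m_c+1},\dots,\boldsymbol{e}_N]$; $Q$ is the $N\times N$ matrix whose columns are eigenvectors of the conjugate transpose $A(\tau)^*$, normalized so that $Q^*P=I_{N\times N}$, and $Q_{\mathfrak{c}}$ is the matrix of the first $m_c$ columns of $Q$. $H_{\mathfrak{c}}=\mathrm{span}\{\boldsymbol{e}_1,\dots,\boldsymbol{e}_{m_c}\}$, $H_{\mathfrak{s}}=\mathrm{span}\{\boldsymbol{e}_{m_c+1},\dots,\boldsymbol{e}_N\}$. For a solution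 $\boldsymbol{y}(t)$, $\boldsymbol{z}=(z_1,\dots,z_N)^T$ is defined by $\boldsymbol{y}=P\boldsymbol{z}$, $\boldsymbol{z}_{\mathfrak{c}}=(z_1,\dots,z_{m_c})^T$, $\boldsymbol{z}_{\mathfrak{s}}=(z_{m_c+1},\dots,z_N)^T$, $\boldsymbol{y}_{\mathfrak{c}}=P_{\mathfrak{c}}\boldsymbol{z}_{\mathfrak{c}}$ (low-mode projection) and $\boldsymbol{y}_{\mathfrak{s}}=P_{\mathfrak{s}}\boldsymbol{z}_{\mathfrak{s}}$ (high-mode projection). $\|\cdot\|$ is the Euclidean (Hermitian) norm. *)

theory Defs
  imports "HOL-Analysis.Analysis" "Jordan_Normal_Form.Schur_Decomposition"
begin

text \<open>Squared norm of the j-th augmented Koornwinder polynomial.\<close>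
definition gk_kappa :: "nat \<Rightarrow> real" where
  "gk_kappa j = ((real j)^2 + 1) * ((real j + 1)^2 + 1) / (2 * real j + 1)"

text \<open>K_j(-1) = (j^2+j+1)(-1)^j.\<close>
definition gk_K :: "nat \<Rightarrow> real" where
  "gk_K j = ((real j)^2 + real j + 1) * (-1)^j"

definition gk_T :: "nat \<Rightarrow> real mat" where
  "gk_T n = mat n n (\<lambda>(i,j). if j < i then 0 else if j = i then (real i)^2 + 1
                             else - (2 * real i + 1))"

definition gk_b :: "nat \<Rightarrow> real vec" where
  "gk_b n = vec n (\<lambda>i. if even (n + i)
      then - (1/2) * (2 * real i + 1) * (real n + real i + 1) * (real n - real i)
      else ((real n)^2 + real n) * (2 * real i + 1)
           - (real i / 2) * (real n + real i) * (real n - real i + 1)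
           - (1/2) * (real i + 1) * (real n - real i - 1) * (real n + real i + 2))"

definition gk_a :: "nat \<Rightarrow> real vec" where
  "gk_a n = (THE x. x \<in> carrier_vec n \<and> gk_T n *\<^sub>v x = gk_b n)"

definition gk_A :: "real \<Rightarrow> real \<Rightarrow> nat \<Rightarrow> real mat" where
  "gk_A \<alpha> \<tau> N = mat N N (\<lambda>(j,n). (1 / gk_kappa j) *
      (1 - 3 * (sqrt (1 - \<alpha>))^2 - \<alpha> * gk_K n
       + (2 / \<tau>) * (\<Sum>k<n. gk_a n $ k * ((if j = k then gk_kappa j else 0) - 1))))"

definition gk_G2 :: "real \<Rightarrow> nat \<Rightarrow> 'a::real_field vec \<Rightarrow> 'a vec" where
  "gk_G2 \<alpha> N v = vec N (\<lambda>j. of_real (- 3 * sqrt (1 - \<alpha>) / gk_kappa j) * (\<Sum>n<N. v $ n)^2)"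

definition gk_G3 :: "nat \<Rightarrow> 'a::real_field vec \<Rightarrow> 'a vec" where
  "gk_G3 N v = vec N (\<lambda>j. of_real (- 1 / gk_kappa j) * (\<Sum>n<N. v $ n)^3)"

definition cnorm :: "complex vec \<Rightarrow> real" where
  "cnorm v = sqrt (\<Sum>i<dim_vec v. (cmod (v $ i))^2)"

definition first_cols :: "nat \<Rightarrow> 'a mat \<Rightarrow> 'a mat" where
  "first_cols m M = mat (dim_row M) m (\<lambda>(i,j). M $$ (i,j))"

definition last_cols :: "nat \<Rightarrow> 'a mat \<Rightarrow> 'a mat" where
  "last_cols m M = mat (dim_row M) (dim_col M - m) (\<lambda>(i,j). M $$ (i, m + j))"

definition first_entries :: "nat \<Rightarrow> 'a vec \<Rightarrow> 'a vec" where
  "first_entries m v = vec m (\<lambda>i. v $ i)"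

definition last_entries :: "nat \<Rightarrow> 'a vec \<Rightarrow> 'a vec" where
  "last_entries m v = vec (dim_vec v - m) (\<lambda>i. v $ (m + i))"

definition col_space :: "'a::semiring_1 mat \<Rightarrow> 'a vec set" where
  "col_space M = {M *\<^sub>v w | w. w \<in> carrier_vec (dim_col M)}"

definition time_avg :: "real \<Rightarrow> (real \<Rightarrow> real) \<Rightarrow> real" where
  "time_avg tm f = (1 / tm) * integral {0..tm} f"

end

theory Submission
  imports Defs
begin


lemma mv_sum: "A \<in> carrier_mat m n \<Longrightarrow> v \<in> carrier_vec n \<Longrightarrow> i < m \<Longrightarrow>
  (A *\<^sub>v v) $ i = (\<Sum>k<n. A $$ (i,k) * v $ k)"
  by (auto simp: scalar_prod_def atLeast0LessThan intro!: sum.cong)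

lemma adj_carrier: "A \<in> carrier_mat n m \<Longrightarrow> mat_adjoint A \<in> carrier_mat m n"
  by (auto simp: mat_adjoint_def)

lemma adj_index: "A \<in> carrier_mat n m \<Longrightarrow> i < m \<Longrightarrow> j < n \<Longrightarrow>
   mat_adjoint A $$ (i,j) = conjugate (A $$ (j,i))"
  by (auto simp: mat_adjoint_def mat_of_rows_def)

lemma cnorm_sq: "(cnorm v)^2 = (\<Sum>i<dim_vec v. (cmod (v$i))^2)"
  unfolding cnorm_def by (simp add: sum_nonneg)

lemma cnorm_nonneg: "0 \<le> cnorm v"
  unfolding cnorm_def by (simp add: sum_nonneg)

lemma cs_sum: "(cmod (\<Sum>n<N. x n))^2 \<le> real N * (\<Sum>n<N. (cmod (x n))^2)"
proof -
  have "(cmod (\<Sum>n<N. x n))^2 \<le> (\<Sum>n<N. cmod (x n))^2"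
    by (intro power_mono norm_sum) auto
  also have "\<dots> = (\<Sum>n<N. 1 * cmod (x n))^2" by simp
  also have "\<dots> \<le> (\<Sum>n<N. 1^2) * (\<Sum>n<N. (cmod (x n))^2)"
    by (rule Cauchy_Schwarz_ineq_sum)
  finally show ?thesis by simp
qed

lemma G_diff:
  fixes a b c2 c3 :: complex
  assumes "cmod a \<le> B" "cmod b \<le> B"
  shows "cmod (c2*a^2 + c3*a^3 - (c2*b^2 + c3*b^3)) \<le> (cmod c2 * (2*B) + cmod c3 * (3*B^2)) * cmod (a-b)"
proof -
  have B0: "0 \<le> B" using assms(1) norm_ge_zero order_trans by blast
  have eq: "c2*a^2 + c3*a^3 - (c2*b^2 + c3*b^3) = (a - b) * (c2*(a+b) + c3*(a^2+a*b+b^2))"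
    by (simp add: algebra_simps power2_eq_square power3_eq_cube)
  have h1: "cmod (a+b) \<le> 2*B" using norm_triangle_ineq[of a b] assms by simp
  have h2: "cmod (a^2+a*b+b^2) \<le> 3*B^2"
  proof -
    have "cmod (a^2+a*b+b^2) \<le> cmod a^2 + cmod a * cmod b + cmod b^2"
      by (metis norm_mult norm_power norm_triangle_le norm_triangle_ineq add_mono order_refl)
    also have "\<dots> \<le> B^2 + B*B + B^2"
      by (intro add_mono power_mono mult_mono) (use assms B0 in auto)
    finally show ?thesis by (simp add: power2_eq_square)
  qed
  have "cmod (c2*(a+b) + c3*(a^2+a*b+b^2)) \<le> cmod c2 * (2*B) + cmod c3 * (3*B^2)"
    using norm_triangle_ineq[of "c2*(a+b)" "c3*(a^2+a*b+b^2)"] h1 h2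
    by (smt (verit, best) mult_left_mono norm_ge_zero norm_mult)
  then show ?thesis unfolding eq norm_mult
    by (metis mult.commute mult_left_mono norm_ge_zero)
qed

lemma eig_left:
  fixes Ac P Q :: "complex mat"
  assumes P: "P \<in> carrier_mat N N" and Q: "Q \<in> carrier_mat N N" and A: "Ac \<in> carrier_mat N N"
    and ev: "\<forall>i<N. Ac *\<^sub>v col P i = lam i \<cdot>\<^sub>v col P i"
    and QP: "mat_adjoint Q * P = 1\<^sub>m N"
    and x: "x \<in> carrier_vec N" and i: "i < N"
  shows "(mat_adjoint Q *\<^sub>v (Ac *\<^sub>v x)) $ i = lam i * (mat_adjoint Q *\<^sub>v x) $ i"
proof -
  define L where "L = mat N N (\<lambda>(i,j). if i = j then lam i else (0::complex))"
  define Qa where "Qa = mat_adjoint Q"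
  have Qa: "Qa \<in> carrier_mat N N" unfolding Qa_def using adj_carrier[OF Q] .
  have L: "L \<in> carrier_mat N N" unfolding L_def by simp
  have PQ: "P * Qa = 1\<^sub>m N" using mat_mult_left_right_inverse[OF Qa P] QP unfolding Qa_def by simp
  have AP: "Ac * P = P * L"
  proof (rule eq_matI)
    fix a b assume a: "a < dim_row (P * L)" and b: "b < dim_col (P * L)"
    then have a': "a < N" and b': "b < N" using P L by auto
    have "(Ac * P) $$ (a,b) = (Ac *\<^sub>v col P b) $ a" using A P a' b' by simp
    also have "\<dots> = lam b * P $$ (a,b)" using ev a' b' P by simp
    also have "\<dots> = (\<Sum>k<N. P $$ (a,k) * L $$ (k,b))"
    proof -
      have "(\<Sum>k<N. P $$ (a,k) * L $$ (k,b)) = (\<Sum>k<N. if k = b then P $$ (a,b) * lam b else 0)"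
        by (rule sum.cong) (auto simp: L_def b')
      also have "\<dots> = P $$ (a,b) * lam b" using b' by simp
      finally show ?thesis by simp
    qed
    also have "\<dots> = (P * L) $$ (a,b)" using P L a' b'
      by (auto simp: scalar_prod_def atLeast0LessThan intro!: sum.cong)
    finally show "(Ac * P) $$ (a,b) = (P * L) $$ (a,b)" .
  qed (use A P L in auto)
  have QA: "Qa * Ac = L * Qa"
  proof -
    have "Qa * Ac = Qa * Ac * (P * Qa)" using PQ Qa A by simp
    also have "\<dots> = Qa * (Ac * P) * Qa" using Qa A P by (simp add: assoc_mult_mat[of _ N N _ N _ N])
    also have "\<dots> = Qa * P * L * Qa" unfolding AP using Qa P L by (simp add: assoc_mult_mat[of _ N N _ N _ N])
    also have "\<dots> = L * Qa" using QP Qa_def L by simp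
    finally show ?thesis .
  qed
  have "Qa *\<^sub>v (Ac *\<^sub>v x) = L *\<^sub>v (Qa *\<^sub>v x)"
    using QA Qa A L x by (metis assoc_mult_mat_vec)
  also have "\<dots> $ i = (\<Sum>k<N. L $$ (i,k) * (Qa *\<^sub>v x) $ k)"
    using L Qa x i by (intro mv_sum) auto
  also have "\<dots> = (\<Sum>k<N. if k = i then lam i * (Qa *\<^sub>v x) $ i else 0)"
    by (rule sum.cong) (auto simp: L_def i)
  finally show ?thesis using i unfolding Qa_def by simp
qed

lemma sum_bound:
  fixes Y :: "complex vec"
  assumes Y: "Y \<in> carrier_vec N" and RY: "cnorm Y \<le> R" and B: "B = sqrt (real N) * R"
  shows "cmod (\<Sum>n<N. Y $ n) \<le> B"
proof -
  have R0: "0 \<le> R" using RY cnorm_nonneg[of Y] by linarith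
  have "(cmod (\<Sum>n<N. Y $ n))^2 \<le> real N * (\<Sum>n<N. (cmod (Y $ n))^2)" by (rule cs_sum)
  also have "\<dots> = real N * (cnorm Y)^2" using Y by (simp add: cnorm_sq)
  also have "\<dots> \<le> real N * R^2" using RY
    using cnorm_nonneg[of Y] by (intro mult_left_mono power_mono) auto
  also have "\<dots> = B^2" unfolding B power_mult_distrib by simp
  finally have "(cmod (\<Sum>n<N. Y $ n))^2 \<le> B^2" .
  then show ?thesis by (rule power2_le_imp_le) (use B R0 in simp)
qed

lemma bound:
  fixes Y u E :: "complex vec" and q c2 c3 :: "nat \<Rightarrow> _"
  assumes Y: "Y \<in> carrier_vec N" and u: "u \<in> carrier_vec N" and RY: "cnorm Y \<le> R" and Ru: "cnorm u \<le> R"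
    and E: "E \<in> carrier_vec mc" and B: "B = sqrt (real N) * R"
    and Ei: "\<forall>i<mc. E$i = (\<Sum>k<N. q i k * (c2 k * (\<Sum>n<N. Y$n)^2 + c3 k * (\<Sum>n<N. Y$n)^3
                  - (c2 k * (\<Sum>n<N. u$n)^2 + c3 k * (\<Sum>n<N. u$n)^3)))"
  shows "(cnorm E)^2 \<le> (\<Sum>i<mc. (\<Sum>k<N. cmod (q i k) * (cmod (c2 k) * (2*B) + cmod (c3 k) * (3*B^2)))^2)
            * real N * (cnorm (Y - u))^2"
proof -
  define M where "M k = cmod (c2 k) * (2*B) + cmod (c3 k) * (3*B^2)" for k
  define SY where "SY = (\<Sum>n<N. Y$n)"
  define Su where "Su = (\<Sum>n<N. u$n)"
  have bY: "cmod SY \<le> B" unfolding SY_def by (rule sum_bound[OF Y RY B])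
  have bu: "cmod Su \<le> B" unfolding Su_def by (rule sum_bound[OF u Ru B])
  have Sd: "SY - Su = (\<Sum>n<N. (Y - u) $ n)"
    unfolding SY_def Su_def using Y u by (simp add: sum_subtractf)
  have Sd2: "(cmod (SY - Su))^2 \<le> real N * (cnorm (Y - u))^2"
    unfolding Sd cnorm_sq using Y u cs_sum by simp
  have Eb: "cmod (E $ i) \<le> (\<Sum>k<N. cmod (q i k) * M k) * cmod (SY - Su)" if i: "i < mc" for i
  proof -
    have "cmod (E $ i) \<le> (\<Sum>k<N. cmod (q i k * (c2 k * SY^2 + c3 k * SY^3 - (c2 k * Su^2 + c3 k * Su^3))))"
      using Ei i unfolding SY_def Su_def by (simp add: norm_sum)
    also have "\<dots> \<le> (\<Sum>k<N. cmod (q i k) * (M k * cmod (SY - Su)))"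
      unfolding norm_mult M_def
      by (intro sum_mono mult_left_mono G_diff bY bu) auto
    finally show ?thesis by (simp add: sum_distrib_right mult.assoc)
  qed
  have "(cnorm E)^2 = (\<Sum>i<mc. (cmod (E $ i))^2)" using E by (simp add: cnorm_sq)
  also have "\<dots> \<le> (\<Sum>i<mc. ((\<Sum>k<N. cmod (q i k) * M k) * cmod (SY - Su))^2)"
    by (intro sum_mono power_mono Eb) auto
  also have "\<dots> = (\<Sum>i<mc. (\<Sum>k<N. cmod (q i k) * M k)^2 * (cmod (SY - Su))^2)"
    by (simp only: power_mult_distrib)
  also have "\<dots> = (\<Sum>i<mc. (\<Sum>k<N. cmod (q i k) * M k)^2) * (cmod (SY - Su))^2"
    by (rule sum_distrib_right[symmetric])
  also have "\<dots> \<le> (\<Sum>i<mc. (\<Sum>k<N. cmod (q i k) * M k)^2) * (real N * (cnorm (Y - u))^2)"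
    by (intro mult_left_mono Sd2) (auto intro: sum_nonneg)
  finally show ?thesis unfolding M_def by (simp add: mult.assoc)
qed



lemma sum_split_shift: fixes f :: "nat \<Rightarrow> 'a::comm_monoid_add" shows "m \<le> n \<Longrightarrow> (\<Sum>k<n. f k) = (\<Sum>k<m. f k) + (\<Sum>k<n-m. f (m+k))"
proof -
  assume mn: "m \<le> n"
  have "(\<Sum>k<n. f k) = (\<Sum>k<m. f k) + (\<Sum>k=m..<n. f k)"
  proof -
    have "(\<Sum>k=0..<m. f k) + (\<Sum>k=m..<n. f k) = (\<Sum>k=0..<n. f k)"
      by (rule sum.atLeastLessThan_concat) (use mn in auto)
    then show ?thesis by (simp add: lessThan_atLeast0)
  qed
  also have "(\<Sum>k=m..<n. f k) = (\<Sum>k<n-m. f (m+k))"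
    using sum.shift_bounds_nat_ivl[of f 0 m "n-m"] mn by (simp add: lessThan_atLeast0 add.commute)
  finally show ?thesis .
qed

lemma cnorm_cont:
  fixes f :: "'b::topological_space \<Rightarrow> complex vec"
  assumes "\<forall>t\<in>S. f t \<in> carrier_vec N" and "\<forall>n<N. continuous_on S (\<lambda>t. f t $ n)"
  shows "continuous_on S (\<lambda>t. (cnorm (f t))^2)"
proof -
  have "continuous_on S (\<lambda>t. \<Sum>n<N. (cmod (f t $ n))^2)"
    using assms(2) by (intro continuous_intros) auto
  then show ?thesis by (rule continuous_on_eq) (use assms(1) in \<open>auto simp: cnorm_sq\<close>)
qed

lemma real_cplx_A:
  fixes y :: "real vec"
  assumes "y \<in> carrier_vec N" "k < N"
  shows "complex_of_real ((gk_A \<alpha> \<tau> N *\<^sub>v y) $ k) =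
     (map_mat complex_of_real (gk_A \<alpha> \<tau> N) *\<^sub>v map_vec complex_of_real y) $ k"
proof -
  have "map_vec complex_of_real (gk_A \<alpha> \<tau> N *\<^sub>v y) = map_mat complex_of_real (gk_A \<alpha> \<tau> N) *\<^sub>v map_vec complex_of_real y"
    by (rule of_real_hom.mult_mat_vec_hom) (use assms in \<open>auto simp: gk_A_def\<close>)
  then have "map_vec complex_of_real (gk_A \<alpha> \<tau> N *\<^sub>v y) $ k = (map_mat complex_of_real (gk_A \<alpha> \<tau> N) *\<^sub>v map_vec complex_of_real y) $ k"
    by simp
  then show ?thesis using assms by (simp add: gk_A_def)
qed

theorem proposition1:
  fixes \<alpha> \<tau> R :: real and N mc :: nat
    and lam :: "nat \<Rightarrow> complex" and P Q :: "complex mat"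
  defines "Ac \<equiv> map_mat complex_of_real (gk_A \<alpha> \<tau> N)"
  assumes alpha: "0 < \<alpha>" "\<alpha> < 1"
    and tau: "0 < \<tau>"
    and N: "2 \<le> N" and mc: "1 \<le> mc" "mc < N"
    and R: "0 < R"
    and diagonalizable: "\<exists>D. diagonal_mat D \<and> similar_mat Ac D"
    and P_carrier: "P \<in> carrier_mat N N"
    and eigvecs: "\<forall>i<N. col P i \<noteq> 0\<^sub>v N \<and> Ac *\<^sub>v col P i = lam i \<cdot>\<^sub>v col P i"
    and multiplicity: "char_poly Ac = (\<Prod>i<N. [:- lam i, 1:])"
    and ordered: "\<forall>i j. i < j \<and> j < N \<longrightarrow>
                    Re (lam j) < Re (lam i) \<or> (Re (lam j) = Re (lam i) \<and> Im (lam j) \<le> Im (lam i))"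
    and Q_carrier: "Q \<in> carrier_mat N N"
    and Q_eigvecs: "\<forall>i<N. col Q i \<noteq> 0\<^sub>v N \<and>
                      (\<exists>\<mu>. mat_adjoint Ac *\<^sub>v col Q i = \<mu> \<cdot>\<^sub>v col Q i)"
    and QP: "mat_adjoint Q * P = 1\<^sub>m N"
  shows "\<exists>C > 0. \<forall>(tm::real) (y :: real \<Rightarrow> real vec) (z :: real \<Rightarrow> complex vec)
           (\<phi> :: complex vec \<Rightarrow> complex vec).
      0 < tm
      \<and> (\<forall>t\<in>{0..tm}. y t \<in> carrier_vec N)
      \<and> (\<forall>t\<in>{0..tm}. \<forall>i<N. ((\<lambda>s. y s $ i) has_real_derivative
             ((gk_A \<alpha> \<tau> N *\<^sub>v y t + gk_G2 \<alpha> N (y t) + gk_G3 N (y t)) $ i)) (at t within {0..tm}))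
      \<and> (\<forall>t\<in>{0..tm}. z t \<in> carrier_vec N \<and> P *\<^sub>v z t = map_vec complex_of_real (y t))
      \<and> (\<forall>v\<in>col_space (first_cols mc P). \<phi> v \<in> col_space (last_cols mc P))
      \<and> (\<forall>i<N. continuous_on {0..tm}
             (\<lambda>t. \<phi> (first_cols mc P *\<^sub>v first_entries mc (z t)) $ i))
      \<and> (\<forall>t\<in>{0..tm}. cnorm (map_vec complex_of_real (y t)) \<le> R)
      \<and> (\<forall>t\<in>{0..tm}. cnorm (first_cols mc P *\<^sub>v first_entries mc (z t)
                              + \<phi> (first_cols mc P *\<^sub>v first_entries mc (z t))) \<le> R)
      \<longrightarrow>
      time_avg tm (\<lambda>t.
         (cnorm (vec mc (\<lambda>i. vector_derivative (\<lambda>s. z s $ i) (at t within {0..tm}))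
                 - vec mc (\<lambda>i. lam i * z t $ i)
                 - mat_adjoint (first_cols mc Q) *\<^sub>v
                     (gk_G2 \<alpha> N (first_cols mc P *\<^sub>v first_entries mc (z t)
                                  + \<phi> (first_cols mc P *\<^sub>v first_entries mc (z t)))
                      + gk_G3 N (first_cols mc P *\<^sub>v first_entries mc (z t)
                                  + \<phi> (first_cols mc P *\<^sub>v first_entries mc (z t))))))^2)
      \<le> C * time_avg tm (\<lambda>t.
         (cnorm (last_cols mc P *\<^sub>v last_entries mc (z t)
                 - \<phi> (first_cols mc P *\<^sub>v first_entries mc (z t))))^2)"
proof -
  define Qa where "Qa = mat_adjoint Q"
  define c2 :: "nat \<Rightarrow> complex" where "c2 k = complex_of_real (- 3 * sqrt (1 - \<alpha>) / gk_kappa k)" for k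
  define c3 :: "nat \<Rightarrow> complex" where "c3 k = complex_of_real (- 1 / gk_kappa k)" for k
  define B where "B = sqrt (real N) * R"
  define K where "K = (\<Sum>i<mc. (\<Sum>k<N. cmod (Qa $$ (i,k)) * (cmod (c2 k) * (2*B) + cmod (c3 k) * (3*B^2)))^2)"
  define C where "C = K * real N + 1"
  have K0: "0 \<le> K" unfolding K_def by (intro sum_nonneg) auto
  have KN0: "0 \<le> K * real N" using K0 by simp
  have C0: "0 < C" unfolding C_def using KN0 by linarith
  have Qa: "Qa \<in> carrier_mat N N" using adj_carrier[OF Q_carrier] Qa_def by simp
  have Ac: "Ac \<in> carrier_mat N N" unfolding Ac_def gk_A_def by simp
  have QPa: "Qa * P = 1\<^sub>m N" using QP Qa_def by simp
  have FP: "first_cols mc P \<in> carrier_mat N mc" using P_carrier by (simp add: first_cols_def)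
  have LP: "last_cols mc P \<in> carrier_mat N (N - mc)" using P_carrier by (simp add: last_cols_def)
  have eig: "\<And>x i. x \<in> carrier_vec N \<Longrightarrow> i < N \<Longrightarrow> (Qa *\<^sub>v (Ac *\<^sub>v x)) $ i = lam i * (Qa *\<^sub>v x) $ i"
    using eig_left[OF P_carrier Q_carrier Ac _ QP] eigvecs Qa_def by auto
  show ?thesis
    apply (rule exI[of _ C])
    apply (intro conjI C0 allI impI)
    subgoal premises H for tm y z \<phi>
    proof -
      have tm: "0 < tm" using H by blast
      have yN: "\<And>t. t \<in> {0..tm} \<Longrightarrow> y t \<in> carrier_vec N" using H by blast
      have yd: "\<And>t i. t \<in> {0..tm} \<Longrightarrow> i < N \<Longrightarrow> ((\<lambda>s. y s $ i) has_real_derivative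
             ((gk_A \<alpha> \<tau> N *\<^sub>v y t + gk_G2 \<alpha> N (y t) + gk_G3 N (y t)) $ i)) (at t within {0..tm})"
        using H by blast
      have zN: "\<And>t. t \<in> {0..tm} \<Longrightarrow> z t \<in> carrier_vec N" using H by blast
      have Pz: "\<And>t. t \<in> {0..tm} \<Longrightarrow> P *\<^sub>v z t = map_vec complex_of_real (y t)" using H by blast
      have phiS: "\<And>v. v \<in> col_space (first_cols mc P) \<Longrightarrow> \<phi> v \<in> col_space (last_cols mc P)" using H by blast
      have phic: "\<And>i. i < N \<Longrightarrow> continuous_on {0..tm}
             (\<lambda>t. \<phi> (first_cols mc P *\<^sub>v first_entries mc (z t)) $ i)" using H by blast
      have RY: "\<And>t. t \<in> {0..tm} \<Longrightarrow> cnorm (map_vec complex_of_real (y t)) \<le> R" using H by blast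
      have Ru: "\<And>t. t \<in> {0..tm} \<Longrightarrow> cnorm (first_cols mc P *\<^sub>v first_entries mc (z t)
                              + \<phi> (first_cols mc P *\<^sub>v first_entries mc (z t))) \<le> R" using H by blast
      define Yc where "Yc t = map_vec complex_of_real (y t)" for t
      define v where "v t = first_cols mc P *\<^sub>v first_entries mc (z t)" for t
      define u where "u t = v t + \<phi> (v t)" for t
      define dy where "dy t = gk_A \<alpha> \<tau> N *\<^sub>v y t + gk_G2 \<alpha> N (y t) + gk_G3 N (y t)" for t
      define Lf where "Lf = (\<lambda>t. (cnorm (vec mc (\<lambda>i. vector_derivative (\<lambda>s. z s $ i) (at t within {0..tm}))
                 - vec mc (\<lambda>i. lam i * z t $ i)
                 - mat_adjoint (first_cols mc Q) *\<^sub>v (gk_G2 \<alpha> N (u t) + gk_G3 N (u t))))^2)"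
      define Rf where "Rf = (\<lambda>t. (cnorm (last_cols mc P *\<^sub>v last_entries mc (z t) - \<phi> (v t)))^2)"
      have YcN: "Yc t \<in> carrier_vec N" if "t \<in> {0..tm}" for t using yN[OF that] Yc_def by simp
      have vN: "v t \<in> carrier_vec N" for t unfolding v_def by (rule mult_mat_vec_carrier[OF FP]) (simp add: first_entries_def)
      have phiN: "\<phi> (v t) \<in> carrier_vec N" for t
      proof -
        have "v t \<in> col_space (first_cols mc P)" unfolding v_def col_space_def using FP by (auto simp: first_entries_def)
        then have "\<phi> (v t) \<in> col_space (last_cols mc P)" by (rule phiS)
        then show ?thesis unfolding col_space_def using LP by auto
      qed
      have uN: "u t \<in> carrier_vec N" for t using vN phiN unfolding u_def by simp
      have z_eq: "z t = Qa *\<^sub>v Yc t" if t: "t \<in> {0..tm}" for t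
      proof -
        have "Qa *\<^sub>v Yc t = Qa *\<^sub>v (P *\<^sub>v z t)" using Pz[OF t] Yc_def by simp
        also have "\<dots> = (Qa * P) *\<^sub>v z t" using Qa P_carrier zN[OF t] by (simp add: assoc_mult_mat_vec)
        also have "\<dots> = z t" using QPa zN[OF t] by simp
        finally show ?thesis by simp
      qed
      have zi: "z t $ i = (\<Sum>k<N. Qa $$ (i,k) * complex_of_real (y t $ k))" if t: "t \<in> {0..tm}" and i: "i < N" for t i
        using z_eq[OF t] mv_sum[OF Qa YcN[OF t] i] yN[OF t] by (simp add: Yc_def)
      have ycont: "continuous_on {0..tm} (\<lambda>t. y t $ j)" if j: "j < N" for j
        unfolding continuous_on_eq_continuous_within using yd j by (blast intro: DERIV_continuous)
      have deriv: "vector_derivative (\<lambda>s. z s $ i) (at t within {0..tm}) = (\<Sum>k<N. Qa $$ (i,k) * complex_of_real (dy t $ k))"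
        if t: "t \<in> {0..tm}" and i: "i < N" for t i
      proof -
        have d1: "((\<lambda>s. \<Sum>k<N. Qa $$ (i,k) * complex_of_real (y s $ k)) has_vector_derivative
             (\<Sum>k<N. Qa $$ (i,k) * complex_of_real (dy t $ k))) (at t within {0..tm})"
        proof (rule has_vector_derivative_sum)
          fix k assume "k \<in> {..<N}"
          then show "((\<lambda>s. Qa $$ (i,k) * complex_of_real (y s $ k)) has_vector_derivative
               Qa $$ (i,k) * complex_of_real (dy t $ k)) (at t within {0..tm})"
            using yd[OF t, of k] unfolding dy_def by (intro has_vector_derivative_mult_right has_vector_derivative_of_real) auto
        qed
        have eqs: "\<And>s. s \<in> {0..tm} \<Longrightarrow> z s $ i = (\<Sum>k<N. Qa $$ (i,k) * complex_of_real (y s $ k))"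
          using zi i by blast
        have "((\<lambda>s. z s $ i) has_vector_derivative (\<Sum>k<N. Qa $$ (i,k) * complex_of_real (dy t $ k))) (at t within {0..tm})"
          by (rule has_vector_derivative_transform[OF t eqs d1])
        then show ?thesis by (rule vector_derivative_within_closed_interval[OF tm t])
      qed
      have SY: "(\<Sum>n<N. Yc t $ n) = complex_of_real (\<Sum>n<N. y t $ n)" if t: "t \<in> {0..tm}" for t
        unfolding of_real_sum by (rule sum.cong) (use yN[OF t] in \<open>auto simp: Yc_def\<close>)
      have dyc: "complex_of_real (dy t $ k) = (Ac *\<^sub>v Yc t) $ k + (c2 k * (\<Sum>n<N. Yc t $ n)^2 + c3 k * (\<Sum>n<N. Yc t $ n)^3)"
        if t: "t \<in> {0..tm}" and k: "k < N" for t k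
        using yN[OF t] k real_cplx_A[OF yN[OF t] k, of \<alpha> \<tau>] unfolding SY[OF t]
        by (simp add: dy_def gk_G2_def gk_G3_def c2_def c3_def Yc_def Ac_def gk_A_def)
      have Gu: "(gk_G2 \<alpha> N (u t) + gk_G3 N (u t)) $ k = c2 k * (\<Sum>n<N. u t $ n)^2 + c3 k * (\<Sum>n<N. u t $ n)^3"
        if k: "k < N" for t k
        using k by (simp add: gk_G2_def gk_G3_def c2_def c3_def)
      have FQ: "first_cols mc Q \<in> carrier_mat N mc" using Q_carrier by (simp add: first_cols_def)
      have Qca: "(mat_adjoint (first_cols mc Q) *\<^sub>v w) $ i = (\<Sum>k<N. Qa $$ (i,k) * w $ k)"
        if w: "w \<in> carrier_vec N" and i: "i < mc" for w i
      proof -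
        have "(mat_adjoint (first_cols mc Q) *\<^sub>v w) $ i = (\<Sum>k<N. mat_adjoint (first_cols mc Q) $$ (i,k) * w $ k)"
          by (rule mv_sum[OF adj_carrier[OF FQ] w i])
        also have "\<dots> = (\<Sum>k<N. Qa $$ (i,k) * w $ k)"
        proof (rule sum.cong)
          fix k assume k: "k \<in> {..<N}"
          have "mat_adjoint (first_cols mc Q) $$ (i,k) = conjugate (first_cols mc Q $$ (k,i))"
            using adj_index[OF FQ i] k by simp
          also have "\<dots> = conjugate (Q $$ (k,i))" using Q_carrier k i mc by (simp add: first_cols_def)
          also have "\<dots> = Qa $$ (i,k)" using adj_index[OF Q_carrier, of i k] i mc k Qa_def by simp
          finally show "mat_adjoint (first_cols mc Q) $$ (i,k) * w $ k = Qa $$ (i,k) * w $ k" by simp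
        qed simp
        finally show ?thesis .
      qed
      define E where "E t = vec mc (\<lambda>i. vector_derivative (\<lambda>s. z s $ i) (at t within {0..tm}))
                 - vec mc (\<lambda>i. lam i * z t $ i)
                 - mat_adjoint (first_cols mc Q) *\<^sub>v (gk_G2 \<alpha> N (u t) + gk_G3 N (u t))" for t
      have EN: "E t \<in> carrier_vec mc" for t
      proof -
        have "mat_adjoint (first_cols mc Q) *\<^sub>v (gk_G2 \<alpha> N (u t) + gk_G3 N (u t)) \<in> carrier_vec mc"
          by (rule mult_mat_vec_carrier[OF adj_carrier[OF FQ]]) (simp add: gk_G2_def gk_G3_def)
        then show ?thesis by (simp add: E_def)
      qed
      have Ei: "\<forall>i<mc. E t $ i = (\<Sum>k<N. Qa $$ (i,k) * (c2 k * (\<Sum>n<N. Yc t $ n)^2 + c3 k * (\<Sum>n<N. Yc t $ n)^3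
                  - (c2 k * (\<Sum>n<N. u t $ n)^2 + c3 k * (\<Sum>n<N. u t $ n)^3)))"
        if t: "t \<in> {0..tm}" for t
      proof (intro allI impI)
        fix i assume i: "i < mc"
        have iN: "i < N" using i mc by simp
        define GY where "GY k = c2 k * (\<Sum>n<N. Yc t $ n)^2 + c3 k * (\<Sum>n<N. Yc t $ n)^3" for k
        define GU where "GU k = c2 k * (\<Sum>n<N. u t $ n)^2 + c3 k * (\<Sum>n<N. u t $ n)^3" for k
        have GN: "gk_G2 \<alpha> N (u t) + gk_G3 N (u t) \<in> carrier_vec N" by (simp add: gk_G2_def gk_G3_def)
        have "E t $ i = (\<Sum>k<N. Qa $$ (i,k) * complex_of_real (dy t $ k)) - lam i * z t $ i
               - (\<Sum>k<N. Qa $$ (i,k) * GU k)"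
          using i FQ deriv[OF t iN] Qca[OF GN i] Gu adj_carrier[OF FQ] unfolding GU_def
          by (simp add: E_def carrier_matD)
        also have "(\<Sum>k<N. Qa $$ (i,k) * complex_of_real (dy t $ k)) =
             (\<Sum>k<N. Qa $$ (i,k) * (Ac *\<^sub>v Yc t) $ k) + (\<Sum>k<N. Qa $$ (i,k) * GY k)"
          by (simp add: dyc[OF t] GY_def distrib_left sum.distrib)
        also have "(\<Sum>k<N. Qa $$ (i,k) * (Ac *\<^sub>v Yc t) $ k) = lam i * z t $ i"
        proof -
          have "(\<Sum>k<N. Qa $$ (i,k) * (Ac *\<^sub>v Yc t) $ k) = (Qa *\<^sub>v (Ac *\<^sub>v Yc t)) $ i"
            by (rule mv_sum[symmetric, OF Qa _ iN]) (use Ac YcN[OF t] in simp)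
          also have "\<dots> = lam i * (Qa *\<^sub>v Yc t) $ i" by (rule eig[OF YcN[OF t] iN])
          finally show ?thesis using z_eq[OF t] by simp
        qed
        finally have "E t $ i = (\<Sum>k<N. Qa $$ (i,k) * GY k) - (\<Sum>k<N. Qa $$ (i,k) * GU k)" by simp
        also have "\<dots> = (\<Sum>k<N. Qa $$ (i,k) * (GY k - GU k))"
          by (simp add: sum_subtractf right_diff_distrib)
        finally show "E t $ i = (\<Sum>k<N. Qa $$ (i,k) * (c2 k * (\<Sum>n<N. Yc t $ n)^2 + c3 k * (\<Sum>n<N. Yc t $ n)^3
                  - (c2 k * (\<Sum>n<N. u t $ n)^2 + c3 k * (\<Sum>n<N. u t $ n)^3)))"
          unfolding GY_def GU_def .
      qed
      have split: "last_cols mc P *\<^sub>v last_entries mc (z t) - \<phi> (v t) = Yc t - u t"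
        if t: "t \<in> {0..tm}" for t
      proof (rule eq_vecI)
        fix n assume "n < dim_vec (Yc t - u t)"
        then have n: "n < N" using uN[of t] by simp
        have LE: "last_entries mc (z t) \<in> carrier_vec (N - mc)" using zN[OF t] by (simp add: last_entries_def)
        have FE: "first_entries mc (z t) \<in> carrier_vec mc" by (simp add: first_entries_def)
        have "Yc t $ n = (P *\<^sub>v z t) $ n" using Pz[OF t] Yc_def by simp
        also have "\<dots> = (\<Sum>k<N. P $$ (n,k) * z t $ k)" by (rule mv_sum[OF P_carrier zN[OF t] n])
        also have "\<dots> = (\<Sum>k<mc. P $$ (n,k) * z t $ k) + (\<Sum>k<N-mc. P $$ (n,mc+k) * z t $ (mc+k))"
          by (rule sum_split_shift) (use mc in simp)
        also have "(\<Sum>k<mc. P $$ (n,k) * z t $ k) = v t $ n"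
          unfolding v_def mv_sum[OF FP FE n] using P_carrier n by (auto simp: first_cols_def first_entries_def intro!: sum.cong)
        also have "(\<Sum>k<N-mc. P $$ (n,mc+k) * z t $ (mc+k)) = (last_cols mc P *\<^sub>v last_entries mc (z t)) $ n"
          unfolding mv_sum[OF LP LE n] using P_carrier n zN[OF t] by (auto simp: last_cols_def last_entries_def intro!: sum.cong)
        finally have "Yc t $ n = v t $ n + (last_cols mc P *\<^sub>v last_entries mc (z t)) $ n" .
        then show "(last_cols mc P *\<^sub>v last_entries mc (z t) - \<phi> (v t)) $ n = (Yc t - u t) $ n"
          using n LP LE vN[of t] phiN[of t] YcN[OF t] by (simp add: u_def)
      qed (use LP YcN[OF that] phiN[of t] uN[of t] in simp)
      have pw: "Lf t \<le> C * Rf t" if t: "t \<in> {0..tm}" for t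
      proof -
        have RY': "cnorm (Yc t) \<le> R" using RY[OF t] Yc_def by simp
        have Ru': "cnorm (u t) \<le> R" using Ru[OF t] unfolding u_def v_def .
        have b: "(cnorm (E t))^2 \<le> K * real N * (cnorm (Yc t - u t))^2"
          using bound[where q="\<lambda>i k. Qa $$ (i,k)", OF YcN[OF t] uN RY' Ru' EN B_def Ei[OF t]]
          unfolding K_def by simp
        have x0: "0 \<le> (cnorm (Yc t - u t))^2" by simp
        have "K * real N * (cnorm (Yc t - u t))^2 \<le> C * (cnorm (Yc t - u t))^2"
          unfolding C_def using x0 by (simp add: distrib_right)
        moreover have "Lf t = (cnorm (E t))^2" by (simp add: Lf_def E_def)
        moreover have "Rf t = (cnorm (Yc t - u t))^2" by (simp add: Rf_def split[OF t])
        ultimately show ?thesis using b by simp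
      qed
      have Rcont: "continuous_on {0..tm} Rf"
      proof -
        have "continuous_on {0..tm} (\<lambda>t. (cnorm (Yc t - u t))^2)"
        proof (rule cnorm_cont[where N=N])
          show "\<forall>t\<in>{0..tm}. Yc t - u t \<in> carrier_vec N" using YcN uN by simp
          show "\<forall>n<N. continuous_on {0..tm} (\<lambda>t. (Yc t - u t) $ n)"
          proof (intro allI impI)
            fix n assume n: "n < N"
            have phic': "continuous_on {0..tm} (\<lambda>t. \<phi> (v t) $ n)" using phic[OF n] unfolding v_def .
            have "continuous_on {0..tm} (\<lambda>t. complex_of_real (y t $ n) - ((\<Sum>k<mc. P $$ (n,k) *
                     (\<Sum>j<N. Qa $$ (k,j) * complex_of_real (y t $ j))) + \<phi> (v t) $ n))"
              using n by (intro continuous_intros ycont phic') auto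
            then show "continuous_on {0..tm} (\<lambda>t. (Yc t - u t) $ n)"
            proof (rule continuous_on_eq)
              fix t assume t: "t \<in> {0..tm}"
              have FE: "first_entries mc (z t) \<in> carrier_vec mc" by (simp add: first_entries_def)
              have "v t $ n = (\<Sum>k<mc. P $$ (n,k) * z t $ k)"
                unfolding v_def mv_sum[OF FP FE n] using P_carrier n by (auto simp: first_cols_def first_entries_def intro!: sum.cong)
              also have "\<dots> = (\<Sum>k<mc. P $$ (n,k) * (\<Sum>j<N. Qa $$ (k,j) * complex_of_real (y t $ j)))"
                using zi[OF t] mc by (auto intro!: sum.cong)
              finally show "complex_of_real (y t $ n) - ((\<Sum>k<mc. P $$ (n,k) *
                     (\<Sum>j<N. Qa $$ (k,j) * complex_of_real (y t $ j))) + \<phi> (v t) $ n) = (Yc t - u t) $ n"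
                using n uN[of t] vN[of t] phiN[of t] yN[OF t] by (simp add: u_def Yc_def)
            qed
          qed
        qed
        then show ?thesis by (rule continuous_on_eq) (simp add: Rf_def split)
      qed
      have Rint: "Rf integrable_on {0..tm}" by (rule integrable_continuous_real[OF Rcont])
      have Rpos: "0 \<le> integral {0..tm} Rf" by (rule integral_nonneg[OF Rint]) (simp add: Rf_def)
      have II: "integral {0..tm} Lf \<le> C * integral {0..tm} Rf"
      proof (cases "Lf integrable_on {0..tm}")
        case True
        have "integral {0..tm} Lf \<le> integral {0..tm} (\<lambda>t. C * Rf t)"
          by (rule integral_le[OF True]) (use integrable_on_cmult_left[OF Rint, of C] pw in auto)
        then show ?thesis by simp
      next
        case False
        then show ?thesis using C0 Rpos by (simp add: not_integrable_integral)
      qed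
      have fin: "time_avg tm Lf \<le> C * time_avg tm Rf"
        unfolding time_avg_def using II tm by (simp add: divide_right_mono)
      show ?thesis using fin unfolding Lf_def Rf_def u_def v_def .
    qed
    done
qed


end
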